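(* The axiom system $PAL_{int}$ is complete with respect to the class of all topo-models: for every formula $\varphi\in\mathcal{L}_{PAL_{int}}$, if $\varphi$ is valid in every topo-model, then $\varphi$ is a theorem of $PAL_{int}$.
   Context: Fix a countable set $\mathit{Prop}$ of propositional variables and a finite non-empty set $\mathcal{A}$ of agents. The language $\mathcal{L}_{PAL_{int}}$ is given by $\varphi ::= p \mid \neg\varphi \mid \varphi\wedge\varphi \mid K_i\varphi \mid \mathrm{int}(\varphi)\mid [\varphi]\varphi$ with $p\in\mathit{Prop}$, $i\in\mathcal{A}$; $\vee,\rightarrow,\leftrightarrow$ are abbreviations, $\bot := p\wedge\neg p$. Topo-models: Let $(X,\tau)$ be a topological space, $\mathrm{Int}$ its interior operator. A neighbourhood function set $\Phi$ on $(X,\tau)$ is a set of partial functions $\theta$ from $X$ to functions $\mathcal{A}\to\tau$ such that for all $x,y\in Dom(\theta)$, $i\in\mathcal{A}$, $U\in\tau$: (1) $\theta(x)(i)\in\tau$; (2) $x\in\theta(x)(i)$; (3) $\theta(x)(i)\subseteq Dom(\theta)$; (4) if $y\in\theta(x)(i)$ then $\theta(x)(i)=\theta(y)(i)$; (5) $\theta|_U\in\Phi$, where $Dom(\theta|_U)=Dom(\theta)\cap U$ and $\theta|_U(x)(i)=\theta(x)(i)\cap U$. A topo-model is $\mathcal{M}=(X,\tau,\Phi,V)$ with $V$ assigning to each $p$ a subset of $X$. A neighbourhood situation is $(x,\theta)$ with $\theta\in\Phi$, $x\in Dom(\theta)$. Semantics: $(x,\theta)\models p$ iff $x\in V(p)$;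 Booleans as usual; $(x,\theta)\models K_i\varphi$ iff $(y,\theta)\models\varphi$ for all $y\in\theta(x)(i)$; $(x,\theta)\models\mathrm{int}(\varphi)$ iff $x\in\mathrm{Int}([\![\varphi]\!]^\theta)$ where $[\![\varphi]\!]^\theta=\{y\in Dom(\theta)\mid (y,\theta)\models\varphi\}$; $(x,\theta)\models[\varphi]\psi$ iff $(x,\theta)\models\mathrm{int}(\varphi)$ implies $(x,\theta^\varphi)\models\psi$, where $\theta^\varphi=\theta|_{\mathrm{Int}([\![\varphi]\!]^\theta)}$. Validity in $\mathcal{M}$ means truth at all neighbourhood situations. The axiom system $PAL_{int}$ has axioms: propositional tautologies; $K_i(\varphi\to\psi)\to(K_i\varphi\to K_i\psi)$; $K_i\varphi\to\varphi$; $K_i\varphi\to K_iK_i\varphi$; $\neg K_i\varphi\to K_i\neg K_i\varphi$; $\mathrm{int}(\varphi\to\psi)\to(\mathrm{int}(\varphi)\to\mathrm{int}(\psi))$; $\mathrm{int}(\varphi)\to\varphi$; $\mathrm{int}(\varphi)\to\mathrm{int}(\mathrm{int}(\varphi))$; $K_i\varphi\to\mathrm{int}(\varphi)$; (R1) $[\varphi]p\leftrightarrow(\mathrm{int}(\varphi)\to p)$; (R2) $[\varphi]\neg\psi\leftrightarrow(\mathrm{int}(\varphi)\to\neg[\varphi]\psi)$; (R3) $[\varphi](\psi\wedge\chi)\leftrightarrow[\varphi]\psi\wedge[\varphi]\chi$; (R4) $[\varphi]\mathrm{int}(\psi)\leftrightarrow(\mathrm{int}(\varphi)\to\mathrm{int}([\varphi]\psi))$;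 (R5) $[\varphi]K_i\psi\leftrightarrow(\mathrm{int}(\varphi)\to K_i[\varphi]\psi)$; (R6) $[\varphi][\psi]\chi\leftrightarrow[\neg[\varphi]\neg\mathrm{int}(\psi)]\chi$; rules: modus ponens, from $\varphi$ infer $K_i\varphi$, from $\varphi$ infer $\mathrm{int}(\varphi)$, from $\varphi$ infer $[\psi]\varphi$. *)

theory Defs
  imports "HOL-Analysis.Abstract_Topology" "HOL-Library.Countable"
begin

text \<open>'p: propositional variables (countable), 'a: agents (finite, nonempty since
every HOL type is nonempty).\<close>

datatype ('p, 'a) fm =
    Atom 'p
  | Neg "('p, 'a) fm"
  | Conj "('p, 'a) fm" "('p, 'a) fm"
  | K 'a "('p, 'a) fm"
  | IntOp "('p, 'a) fm"
  | Ann "('p, 'a) fm" "('p, 'a) fm"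

definition Disj :: "('p, 'a) fm \<Rightarrow> ('p, 'a) fm \<Rightarrow> ('p, 'a) fm" where
  "Disj \<phi> \<psi> = Neg (Conj (Neg \<phi>) (Neg \<psi>))"

definition Imp :: "('p, 'a) fm \<Rightarrow> ('p, 'a) fm \<Rightarrow> ('p, 'a) fm" where
  "Imp \<phi> \<psi> = Disj (Neg \<phi>) \<psi>"

definition Iff :: "('p, 'a) fm \<Rightarrow> ('p, 'a) fm \<Rightarrow> ('p, 'a) fm" where
  "Iff \<phi> \<psi> = Conj (Imp \<phi> \<psi>) (Imp \<psi> \<phi>)"

type_synonym ('x, 'a) nbf = "'x \<Rightarrow> ('a \<Rightarrow> 'x set) option"

definition restr :: "'x set \<Rightarrow> ('x, 'a) nbf \<Rightarrow> ('x, 'a) nbf" where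
  "restr U \<theta> = (\<lambda>x. if x \<in> U then map_option (\<lambda>f i. f i \<inter> U) (\<theta> x) else None)"

definition nbf_set :: "'x topology \<Rightarrow> ('x, 'a) nbf set \<Rightarrow> bool" where
  "nbf_set T \<Phi> \<longleftrightarrow>
    (\<forall>\<theta>\<in>\<Phi>.
       dom \<theta> \<subseteq> topspace T \<and>
       (\<forall>x\<in>dom \<theta>. \<forall>i.
          openin T (the (\<theta> x) i) \<and>
          x \<in> the (\<theta> x) i \<and>
          the (\<theta> x) i \<subseteq> dom \<theta> \<and>
          (\<forall>y. y \<in> the (\<theta> x) i \<longrightarrow> the (\<theta> x) i = the (\<theta> y) i)) \<and>
       (\<forall>U. openin T U \<longrightarrow> restr U \<theta> \<in> \<Phi>))"

definition topo_model :: "'x topology \<Rightarrow> ('x, 'a) nbf set \<Rightarrow> ('p \<Rightarrow> 'x set) \<Rightarrow> bool" where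
  "topo_model T \<Phi> V \<longleftrightarrow> nbf_set T \<Phi> \<and> (\<forall>p. V p \<subseteq> topspace T)"

primrec sat :: "'x topology \<Rightarrow> ('p \<Rightarrow> 'x set) \<Rightarrow> ('p, 'a) fm \<Rightarrow> ('x, 'a) nbf \<Rightarrow> 'x \<Rightarrow> bool"
where
  "sat T V (Atom p) \<theta> x = (x \<in> V p)"
| "sat T V (Neg \<phi>) \<theta> x = (\<not> sat T V \<phi> \<theta> x)"
| "sat T V (Conj \<phi> \<psi>) \<theta> x = (sat T V \<phi> \<theta> x \<and> sat T V \<psi> \<theta> x)"
| "sat T V (K i \<phi>) \<theta> x = (\<forall>y\<in>the (\<theta> x) i. sat T V \<phi> \<theta> y)"
| "sat T V (IntOp \<phi>) \<theta> x = (x \<in> T interior_of {y \<in> dom \<theta>. sat T V \<phi> \<theta> y})"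
| "sat T V (Ann \<phi> \<psi>) \<theta> x =
     (x \<in> T interior_of {y \<in> dom \<theta>. sat T V \<phi> \<theta> y} \<longrightarrow>
        sat T V \<psi> (restr (T interior_of {y \<in> dom \<theta>. sat T V \<phi> \<theta> y}) \<theta>) x)"

definition valid_in :: "'x topology \<Rightarrow> ('x, 'a) nbf set \<Rightarrow> ('p \<Rightarrow> 'x set) \<Rightarrow> ('p, 'a) fm \<Rightarrow> bool" where
  "valid_in T \<Phi> V \<phi> \<longleftrightarrow> (\<forall>\<theta>\<in>\<Phi>. \<forall>x\<in>dom \<theta>. sat T V \<phi> \<theta> x)"

definition valid_all :: "'x itself \<Rightarrow> ('p, 'a) fm \<Rightarrow> bool" where
  "valid_all _ \<phi> \<longleftrightarrow>
     (\<forall>(T :: 'x topology) \<Phi> V. topo_model T \<Phi> V \<longrightarrow> valid_in T \<Phi> V \<phi>)"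

primrec tv :: "(('p, 'a) fm \<Rightarrow> bool) \<Rightarrow> ('p, 'a) fm \<Rightarrow> bool" where
  "tv v (Atom p) = v (Atom p)"
| "tv v (Neg \<phi>) = (\<not> tv v \<phi>)"
| "tv v (Conj \<phi> \<psi>) = (tv v \<phi> \<and> tv v \<psi>)"
| "tv v (K i \<phi>) = v (K i \<phi>)"
| "tv v (IntOp \<phi>) = v (IntOp \<phi>)"
| "tv v (Ann \<phi> \<psi>) = v (Ann \<phi> \<psi>)"

definition tautology :: "('p, 'a) fm \<Rightarrow> bool" where
  "tautology \<phi> \<longleftrightarrow> (\<forall>v. tv v \<phi>)"

inductive derivable :: "('p, 'a) fm \<Rightarrow> bool" where
  Taut: "tautology \<phi> \<Longrightarrow> derivable \<phi>"
| K_K: "derivable (Imp (K i (Imp \<phi> \<psi>)) (Imp (K i \<phi>) (K i \<psi>)))"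
| K_T: "derivable (Imp (K i \<phi>) \<phi>)"
| K_4: "derivable (Imp (K i \<phi>) (K i (K i \<phi>)))"
| K_5: "derivable (Imp (Neg (K i \<phi>)) (K i (Neg (K i \<phi>))))"
| Int_K: "derivable (Imp (IntOp (Imp \<phi> \<psi>)) (Imp (IntOp \<phi>) (IntOp \<psi>)))"
| Int_T: "derivable (Imp (IntOp \<phi>) \<phi>)"
| Int_4: "derivable (Imp (IntOp \<phi>) (IntOp (IntOp \<phi>)))"
| K_Int: "derivable (Imp (K i \<phi>) (IntOp \<phi>))"
| R1: "derivable (Iff (Ann \<phi> (Atom p)) (Imp (IntOp \<phi>) (Atom p)))"
| R2: "derivable (Iff (Ann \<phi> (Neg \<psi>)) (Imp (IntOp \<phi>) (Neg (Ann \<phi> \<psi>))))"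
| R3: "derivable (Iff (Ann \<phi> (Conj \<psi> \<chi>)) (Conj (Ann \<phi> \<psi>) (Ann \<phi> \<chi>)))"
| R4: "derivable (Iff (Ann \<phi> (IntOp \<psi>)) (Imp (IntOp \<phi>) (IntOp (Ann \<phi> \<psi>))))"
| R5: "derivable (Iff (Ann \<phi> (K i \<psi>)) (Imp (IntOp \<phi>) (K i (Ann \<phi> \<psi>))))"
| R6: "derivable (Iff (Ann \<phi> (Ann \<psi> \<chi>)) (Ann (Neg (Ann \<phi> (Neg (IntOp \<psi>)))) \<chi>))"
| MP: "derivable (Imp \<phi> \<psi>) \<Longrightarrow> derivable \<phi> \<Longrightarrow> derivable \<psi>"
| NecK: "derivable \<phi> \<Longrightarrow> derivable (K i \<phi>)"
| NecInt: "derivable \<phi> \<Longrightarrow> derivable (IntOp \<phi>)"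
| NecAnn: "derivable \<phi> \<Longrightarrow> derivable (Ann \<psi> \<phi>)"

end

theory Submission
  imports Defs
begin


instance fm :: (countable, countable) countable by countable_datatype


definition bot :: "('p,'a) fm" where "bot = Conj (Atom undefined) (Neg (Atom undefined))"
definition top :: "('p,'a) fm" where "top = Neg bot"

primrec imps :: "('p,'a) fm list \<Rightarrow> ('p,'a) fm \<Rightarrow> ('p,'a) fm" where
  "imps [] \<phi> = \<phi>"
| "imps (a # L) \<phi> = Imp a (imps L \<phi>)"

lemma tv_Imp[simp]: "tv v (Imp a b) = (tv v a \<longrightarrow> tv v b)"
  by (simp add: Imp_def Disj_def)
lemma tv_Iff[simp]: "tv v (Iff a b) = (tv v a \<longleftrightarrow> tv v b)"
  by (auto simp add: Iff_def)
lemma tv_bot[simp]: "tv v bot = False" by (simp add: bot_def)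
lemma tv_top[simp]: "tv v top = True" by (simp add: top_def)
lemma tv_imps[simp]: "tv v (imps L \<phi>) = ((\<forall>a\<in>set L. tv v a) \<longrightarrow> tv v \<phi>)"
  by (induction L) auto

lemma sat_Imp[simp]: "sat T V (Imp a b) \<theta> x = (sat T V a \<theta> x \<longrightarrow> sat T V b \<theta> x)"
  by (simp add: Imp_def Disj_def)
lemma sat_Iff[simp]: "sat T V (Iff a b) \<theta> x = (sat T V a \<theta> x \<longleftrightarrow> sat T V b \<theta> x)"
  by (auto simp add: Iff_def)

lemma tMP: "derivable A \<Longrightarrow> tautology (Imp A B) \<Longrightarrow> derivable B"
  by (meson derivable.MP derivable.Taut)
lemma tMP2: "derivable A \<Longrightarrow> derivable B \<Longrightarrow> tautology (Imp A (Imp B C)) \<Longrightarrow> derivable C"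
  by (meson derivable.MP derivable.Taut)
lemma tMP3: "derivable A \<Longrightarrow> derivable B \<Longrightarrow> derivable C \<Longrightarrow> tautology (Imp A (Imp B (Imp C D))) \<Longrightarrow> derivable D"
  by (meson derivable.MP derivable.Taut)
lemma dtop: "derivable top" by (rule Taut) (simp add: tautology_def)

section \<open>Soundness\<close>

lemma restr_restr: "restr A (restr B \<theta>) = restr (A \<inter> B) \<theta>"
  by (auto simp: restr_def fun_eq_iff option.map_comp comp_def Int_ac split: option.splits)

lemma dom_restr: "dom (restr U \<theta>) = dom \<theta> \<inter> U"
  by (auto simp: restr_def dom_def)

lemma the_restr: "x \<in> U \<Longrightarrow> x \<in> dom \<theta> \<Longrightarrow> the (restr U \<theta> x) i = the (\<theta> x) i \<inter> U"
  by (auto simp: restr_def)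

locale tm =
  fixes T :: "'x topology" and \<Phi> :: "('x,'a) nbf set" and V :: "'p \<Rightarrow> 'x set"
  assumes tmod: "topo_model T \<Phi> V"
begin

lemma nb: "nbf_set T \<Phi>" using tmod by (simp add: topo_model_def)

lemma dom_top: "\<theta> \<in> \<Phi> \<Longrightarrow> dom \<theta> \<subseteq> topspace T"
  using nb by (simp add: nbf_set_def)
lemma nb_open: "\<theta> \<in> \<Phi> \<Longrightarrow> x \<in> dom \<theta> \<Longrightarrow> openin T (the (\<theta> x) i)"
  using nb unfolding nbf_set_def by blast
lemma nb_in: "\<theta> \<in> \<Phi> \<Longrightarrow> x \<in> dom \<theta> \<Longrightarrow> x \<in> the (\<theta> x) i"
  using nb unfolding nbf_set_def by blast
lemma nb_sub: "\<theta> \<in> \<Phi> \<Longrightarrow> x \<in> dom \<theta> \<Longrightarrow> the (\<theta> x) i \<subseteq> dom \<theta>"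
  using nb unfolding nbf_set_def by blast
lemma nb_part: "\<theta> \<in> \<Phi> \<Longrightarrow> x \<in> dom \<theta> \<Longrightarrow> y \<in> the (\<theta> x) i \<Longrightarrow> the (\<theta> y) i = the (\<theta> x) i"
  using nb unfolding nbf_set_def by metis
lemma nb_restr: "\<theta> \<in> \<Phi> \<Longrightarrow> openin T U \<Longrightarrow> restr U \<theta> \<in> \<Phi>"
  using nb unfolding nbf_set_def by blast

lemma dom_open: "\<theta> \<in> \<Phi> \<Longrightarrow> openin T (dom \<theta>)"
proof -
  assume th: "\<theta> \<in> \<Phi>"
  have "dom \<theta> = (\<Union>x\<in>dom \<theta>. the (\<theta> x) undefined)"
    using nb_in[OF th] nb_sub[OF th] by blast
  moreover have "openin T (\<Union>x\<in>dom \<theta>. the (\<theta> x) undefined)"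
    using nb_open[OF th] by (intro openin_Union) auto
  ultimately show ?thesis by simp
qed

abbreviation S where "S \<phi> \<theta> \<equiv> {y \<in> dom \<theta>. sat T V \<phi> \<theta> y}"

lemma tv_sat: "tv (\<lambda>\<psi>. sat T V \<psi> \<theta> x) \<phi> = sat T V \<phi> \<theta> x"
  by (induction \<phi>) auto

lemma t_KK: "sat T V (Imp (K i (Imp \<phi> \<psi>)) (Imp (K i \<phi>) (K i \<psi>))) \<theta> x" by auto
lemma t_KT: "\<theta> \<in> \<Phi> \<Longrightarrow> x \<in> dom \<theta> \<Longrightarrow> sat T V (Imp (K i \<phi>) \<phi>) \<theta> x" using nb_in by auto
lemma t_K4: "\<theta> \<in> \<Phi> \<Longrightarrow> x \<in> dom \<theta> \<Longrightarrow> sat T V (Imp (K i \<phi>) (K i (K i \<phi>))) \<theta> x"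
  using nb_part[of \<theta> x _ i] by simp
lemma t_K5: "\<theta> \<in> \<Phi> \<Longrightarrow> x \<in> dom \<theta> \<Longrightarrow> sat T V (Imp (Neg (K i \<phi>)) (K i (Neg (K i \<phi>)))) \<theta> x"
  using nb_part[of \<theta> x _ i] by simp
lemma t_IntK: "sat T V (Imp (IntOp (Imp \<phi> \<psi>)) (Imp (IntOp \<phi>) (IntOp \<psi>))) \<theta> x"
proof -
    have e: "T interior_of S (Imp \<phi> \<psi>) \<theta> \<inter> T interior_of S \<phi> \<theta> = T interior_of (S (Imp \<phi> \<psi>) \<theta> \<inter> S \<phi> \<theta>)"
      by (rule interior_of_Int[symmetric])
    have "S (Imp \<phi> \<psi>) \<theta> \<inter> S \<phi> \<theta> \<subseteq> S \<psi> \<theta>" by (simp only: sat_Imp mem_Collect_eq Int_iff subset_iff) blast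
    then have "T interior_of S (Imp \<phi> \<psi>) \<theta> \<inter> T interior_of S \<phi> \<theta> \<subseteq> T interior_of S \<psi> \<theta>"
      unfolding e by (rule interior_of_mono)
    then show ?thesis
      by (simp only: sat_Imp sat.simps(5)) blast
qed
lemma t_IntT: "sat T V (Imp (IntOp \<phi>) \<phi>) \<theta> x"
proof -
    have "x \<in> T interior_of S \<phi> \<theta> \<longrightarrow> sat T V \<phi> \<theta> x"
      using interior_of_subset[of T "S \<phi> \<theta>"] by blast
    then show ?thesis by simp
qed
lemma t_Int4: "sat T V (Imp (IntOp \<phi>) (IntOp (IntOp \<phi>))) \<theta> x"
proof -
    have "{y \<in> dom \<theta>. y \<in> T interior_of S \<phi> \<theta>} = T interior_of S \<phi> \<theta>"
      using interior_of_subset[of T "S \<phi> \<theta>"] by blast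
    then show ?thesis by simp
qed
lemma t_KInt: "\<theta> \<in> \<Phi> \<Longrightarrow> x \<in> dom \<theta> \<Longrightarrow> sat T V (Imp (K i \<phi>) (IntOp \<phi>)) \<theta> x"
proof -
    assume th: "\<theta> \<in> \<Phi>" and x: "x \<in> dom \<theta>"
    have "x \<in> T interior_of S \<phi> \<theta>" if h: "\<forall>y\<in>the (\<theta> x) i. sat T V \<phi> \<theta> y"
    proof -
      have "the (\<theta> x) i \<subseteq> S \<phi> \<theta>" using h nb_sub[OF th x] by auto
      then have "the (\<theta> x) i \<subseteq> T interior_of S \<phi> \<theta>" using nb_open[OF th x] by (rule interior_of_maximal)
      then show ?thesis using nb_in[OF th x] by auto
    qed
    then show ?thesis by simp
qed
lemma t_R4: "sat T V (Iff (Ann \<phi> (IntOp \<psi>)) (Imp (IntOp \<phi>) (IntOp (Ann \<phi> \<psi>)))) \<theta> x"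
proof -
    define U where "U = T interior_of S \<phi> \<theta>"
    have Ud: "U \<subseteq> dom \<theta>" unfolding U_def using interior_of_subset[of T "S \<phi> \<theta>"] by blast
    define A where "A = {y \<in> dom \<theta>. y \<in> U \<longrightarrow> sat T V \<psi> (restr U \<theta>) y}"
    have e: "S \<psi> (restr U \<theta>) = A \<inter> U" unfolding A_def using Ud by (auto simp: dom_restr)
    have "T interior_of (A \<inter> U) = T interior_of A \<inter> U"
      by (simp add: interior_of_Int U_def)
    then show ?thesis
      using e by (simp add: U_def[symmetric] A_def[symmetric])
qed
lemma t_R5: "x \<in> dom \<theta> \<Longrightarrow> sat T V (Iff (Ann \<phi> (K i \<psi>)) (Imp (IntOp \<phi>) (K i (Ann \<phi> \<psi>)))) \<theta> x"
proof -
    assume x: "x \<in> dom \<theta>"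
    define U where "U = T interior_of S \<phi> \<theta>"
    show ?thesis
      using x by (simp add: U_def[symmetric] the_restr) blast
qed
lemma t_R6: "sat T V (Iff (Ann \<phi> (Ann \<psi> \<chi>)) (Ann (Neg (Ann \<phi> (Neg (IntOp \<psi>)))) \<chi>)) \<theta> x"
proof -
    define U where "U = T interior_of S \<phi> \<theta>"
    have Ud: "U \<subseteq> dom \<theta>" unfolding U_def using interior_of_subset[of T "S \<phi> \<theta>"] by blast
    define U2 where "U2 = T interior_of S \<psi> (restr U \<theta>)"
    have "S \<psi> (restr U \<theta>) \<subseteq> U" by (auto simp: dom_restr)
    then have U2U: "U2 \<subseteq> U" unfolding U2_def using interior_of_subset[of T "S \<psi> (restr U \<theta>)"] by blast
    have e: "sat T V (Neg (Ann \<phi> (Neg (IntOp \<psi>)))) \<theta> y = (y \<in> U \<and> y \<in> U2)" for y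
      by (simp only: sat.simps U_def[symmetric] U2_def[symmetric]) blast
    have "S (Neg (Ann \<phi> (Neg (IntOp \<psi>)))) \<theta> = U2"
      unfolding e using U2U Ud by blast
    then have i: "T interior_of S (Neg (Ann \<phi> (Neg (IntOp \<psi>)))) \<theta> = U2"
      by (simp add: U2_def)
    have r: "restr U2 (restr U \<theta>) = restr U2 \<theta>" using U2U
      by (simp add: restr_restr Int_absorb2)
    have L: "sat T V (Ann \<phi> (Ann \<psi> \<chi>)) \<theta> x = (x \<in> U \<longrightarrow> x \<in> U2 \<longrightarrow> sat T V \<chi> (restr U2 (restr U \<theta>)) x)"
      by (simp only: sat.simps(6) U_def[symmetric] U2_def[symmetric])
    have R: "sat T V (Ann (Neg (Ann \<phi> (Neg (IntOp \<psi>)))) \<chi>) \<theta> x = (x \<in> U2 \<longrightarrow> sat T V \<chi> (restr U2 \<theta>) x)"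
      by (simp only: sat.simps(6) i)
    show ?thesis
      unfolding sat_Iff L R r using U2U by blast
qed
lemma soundness: "derivable \<phi> \<Longrightarrow> \<forall>\<theta>\<in>\<Phi>. \<forall>x\<in>dom \<theta>. sat T V \<phi> \<theta> x"
proof (induction rule: derivable.induct)
  case (Taut \<phi>)
  show ?case
  proof (intro ballI)
    fix \<theta> x
    have "tv (\<lambda>\<psi>. sat T V \<psi> \<theta> x) \<phi>" using Taut unfolding tautology_def by blast
    then show "sat T V \<phi> \<theta> x" by (simp only: tv_sat)
  qed
next
  case (K_K i \<phi> \<psi>) show ?case by (intro ballI, rule t_KK)
next
  case (K_T i \<phi>) show ?case by (intro ballI, erule (1) t_KT)
next
  case (K_4 i \<phi>) show ?case by (intro ballI, erule (1) t_K4)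
next
  case (K_5 i \<phi>) show ?case by (intro ballI, erule (1) t_K5)
next
  case (Int_K \<phi> \<psi>) show ?case by (intro ballI, rule t_IntK)
next
  case (Int_T \<phi>) show ?case by (intro ballI, rule t_IntT)
next
  case (Int_4 \<phi>) show ?case by (intro ballI, rule t_Int4)
next
  case (K_Int i \<phi>) show ?case by (intro ballI, erule (1) t_KInt)
next
  case (R1 \<phi> p) then show ?case by simp
next
  case (R2 \<phi> \<psi>) then show ?case by simp
next
  case (R3 \<phi> \<psi> \<chi>) then show ?case by auto
next
  case (R4 \<phi> \<psi>) show ?case by (intro ballI, rule t_R4)
next
  case (R5 \<phi> i \<psi>) show ?case by (intro ballI, erule t_R5)
next
  case (R6 \<phi> \<psi> \<chi>) show ?case by (intro ballI, rule t_R6)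
next
  case (MP \<phi> \<psi>) then show ?case by (simp only: sat_Imp) blast
next
  case (NecK \<phi> i)
  show ?case
  proof (intro ballI)
    fix \<theta> x assume th: "\<theta> \<in> \<Phi>" and x: "x \<in> dom \<theta>"
    have "\<forall>y\<in>the (\<theta> x) i. sat T V \<phi> \<theta> y"
    proof
      fix y assume "y \<in> the (\<theta> x) i"
      then have "y \<in> dom \<theta>" using nb_sub[OF th x] by blast
      then show "sat T V \<phi> \<theta> y" using NecK.IH th by blast
    qed
    then show "sat T V (K i \<phi>) \<theta> x" by simp
  qed
next
  case (NecInt \<phi>)
  show ?case
  proof (intro ballI)
    fix \<theta> x assume th: "\<theta> \<in> \<Phi>" and x: "x \<in> dom \<theta>"
    have "S \<phi> \<theta> = dom \<theta>" using NecInt.IH th by blast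
    then show "sat T V (IntOp \<phi>) \<theta> x" using dom_open[OF th] x by (simp add: interior_of_openin)
  qed
next
  case (NecAnn \<phi> \<psi>)
  show ?case
  proof (intro ballI)
    fix \<theta> x assume th: "\<theta> \<in> \<Phi>" and x: "x \<in> dom \<theta>"
    define U where "U = T interior_of S \<psi> \<theta>"
    have "restr U \<theta> \<in> \<Phi>" using nb_restr[OF th] unfolding U_def by simp
    moreover have "x \<in> U \<Longrightarrow> x \<in> dom (restr U \<theta>)" using x by (simp add: dom_restr)
    ultimately have "x \<in> U \<longrightarrow> sat T V \<phi> (restr U \<theta>) x" using NecAnn.IH by blast
    then show "sat T V (Ann \<psi> \<phi>) \<theta> x" by (simp add: U_def)
  qed
qed

end

lemma sound_valid: "topo_model T \<Phi> V \<Longrightarrow> derivable \<phi> \<Longrightarrow> valid_in T \<Phi> V \<phi>"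
  unfolding valid_in_def using tm.soundness tm.intro by blast


section \<open>Reduction to static formulas\<close>

primrec cx :: "('p,'a) fm \<Rightarrow> nat" where
  "cx (Atom p) = 1"
| "cx (Neg \<phi>) = Suc (cx \<phi>)"
| "cx (Conj \<phi> \<psi>) = Suc (max (cx \<phi>) (cx \<psi>))"
| "cx (K i \<phi>) = Suc (cx \<phi>)"
| "cx (IntOp \<phi>) = Suc (cx \<phi>)"
| "cx (Ann \<phi> \<psi>) = (4 + cx \<phi>) * cx \<psi>"

lemma cx_pos: "cx \<phi> \<ge> 1"
  by (induction \<phi>) auto

primrec static :: "('p,'a) fm \<Rightarrow> bool" where
  "static (Atom p) = True"
| "static (Neg \<phi>) = static \<phi>"
| "static (Conj \<phi> \<psi>) = (static \<phi> \<and> static \<psi>)"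
| "static (K i \<phi>) = static \<phi>"
| "static (IntOp \<phi>) = static \<phi>"
| "static (Ann \<phi> \<psi>) = False"

lemma static_Imp[simp]: "static (Imp a b) = (static a \<and> static b)"
  by (simp add: Imp_def Disj_def)

lemma norm_cong:
  assumes nec: "\<And>\<phi>. derivable \<phi> \<Longrightarrow> derivable (M \<phi>)"
    and kax: "\<And>\<phi> \<psi>. derivable (Imp (M (Imp \<phi> \<psi>)) (Imp (M \<phi>) (M \<psi>)))"
    and e: "derivable (Iff a b)"
  shows "derivable (Iff (M a) (M b))"
proof -
  have 1: "derivable (Imp a b)" by (rule tMP[OF e]) (simp add: tautology_def)
  have 2: "derivable (Imp b a)" by (rule tMP[OF e]) (simp add: tautology_def)
  have 3: "derivable (Imp (M a) (M b))" using derivable.MP[OF kax nec[OF 1]] .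
  have 4: "derivable (Imp (M b) (M a))" using derivable.MP[OF kax nec[OF 2]] .
  show ?thesis by (rule tMP2[OF 3 4]) (auto simp: tautology_def)
qed

lemma K_cong: "derivable (Iff a b) \<Longrightarrow> derivable (Iff (K i a) (K i b))"
  by (rule norm_cong[where M="K i"]) (auto intro: derivable.intros)
lemma Int_cong: "derivable (Iff a b) \<Longrightarrow> derivable (Iff (IntOp a) (IntOp b))"
  by (rule norm_cong[where M="IntOp"]) (auto intro: derivable.intros)

lemma ineq6: "(k::nat) \<ge> 1 \<Longrightarrow> (5 + (4+a)*(2+b)) * k < (4+a) * ((4+b) * k)"
proof -
  assume k: "k \<ge> 1"
  have "5 + (4+a)*(2+b) < (4+a)*(4+b)" by (simp add: algebra_simps)
  then have "(5 + (4+a)*(2+b)) * k < ((4+a)*(4+b)) * k" using k by simp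
  then show ?thesis by (simp add: mult.assoc)
qed

lemma ineq1: "(b::nat) \<ge> 1 \<Longrightarrow> Suc a < (4+a)*b"
proof -
  assume "b \<ge> 1"
  then have "4+a \<le> (4+a)*b" using mult_le_mono2[of 1 b "4+a"] by simp
  then show ?thesis by linarith
qed

lemma ineqC1: "(4 + a) * (x::nat) < (4 + a) * Suc (max x y)"
proof -
  have "(4+a)*x \<le> (4+a)* max x y" by (simp add: mult_le_mono2)
  moreover have "(4 + a) * Suc (max x y) = 4 + a + (4+a)* max x y" by simp
  ultimately show ?thesis by linarith
qed

lemma ineqC2: "(4 + a) * (y::nat) < (4 + a) * Suc (max x y)"
  using ineqC1[of a y x] by (simp add: max.commute)

lemma reduction: "\<exists>s. static s \<and> derivable (Iff \<phi> s)"
proof (induction \<phi> rule: measure_induct_rule[of cx])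
  case (less \<phi>)
  show ?case
  proof (cases \<phi>)
    case (Atom p)
    then show ?thesis by (intro exI[of _ \<phi>]) (auto intro: Taut simp: tautology_def)
  next
    case (Neg a)
    then have h: "cx a < cx \<phi>" by simp
    obtain s where s: "static s" "derivable (Iff a s)" using less[OF h] by blast
    have "derivable (Iff (Neg a) (Neg s))" by (rule tMP[OF s(2)]) (auto simp: tautology_def)
    then show ?thesis using Neg s by (intro exI[of _ "Neg s"] conjI) simp_all
  next
    case (Conj a b)
    have h1: "cx a < cx \<phi>" and h2: "cx b < cx \<phi>" using Conj by auto
    obtain s1 where "static s1" "derivable (Iff a s1)" using less[OF h1] by blast
    obtain s2 where "static s2" "derivable (Iff b s2)" using less[OF h2] by blast
    have "derivable (Iff (Conj a b) (Conj s1 s2))"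
      using \<open>derivable (Iff a s1)\<close> \<open>derivable (Iff b s2)\<close> by (rule tMP2) (auto simp: tautology_def)
    then show ?thesis using Conj \<open>static s1\<close> \<open>static s2\<close> by (intro exI[of _ "Conj s1 s2"] conjI) simp_all
  next
    case (K i a)
    then have h: "cx a < cx \<phi>" by simp
    obtain s where "static s" "derivable (Iff a s)" using less[OF h] by blast
    then show ?thesis using K by (intro exI[of _ "K i s"]) (auto intro: K_cong)
  next
    case (IntOp a)
    then have h: "cx a < cx \<phi>" by simp
    obtain s where "static s" "derivable (Iff a s)" using less[OF h] by blast
    then show ?thesis using IntOp by (intro exI[of _ "IntOp s"]) (auto intro: Int_cong)
  next
    case (Ann a b)
    have ia: "cx (IntOp a) < cx \<phi>" using Ann ineq1[OF cx_pos[of b]] by simp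
    show ?thesis
    proof (cases b)
      case (Atom p)
      obtain s1 where s1: "static s1" "derivable (Iff (IntOp a) s1)" using less ia by blast
      have r: "derivable (Iff (Ann a (Atom p)) (Imp (IntOp a) (Atom p)))" by (rule R1)
      have "derivable (Iff (Ann a (Atom p)) (Imp s1 (Atom p)))" by (rule tMP2[OF r s1(2)]) (auto simp: tautology_def)
      then show ?thesis using s1 Ann Atom by (intro exI[of _ "Imp s1 (Atom p)"] conjI) simp_all
    next
      case (Neg b')
      obtain s1 where s1: "static s1" "derivable (Iff (IntOp a) s1)" using less ia by blast
      have "cx (Ann a b') < cx \<phi>" using Ann Neg by simp
      then obtain s2 where s2: "static s2" "derivable (Iff (Ann a b') s2)" using less by blast
      have r: "derivable (Iff (Ann a (Neg b')) (Imp (IntOp a) (Neg (Ann a b'))))" by (rule R2)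
      have "derivable (Iff (Ann a (Neg b')) (Imp s1 (Neg s2)))" by (rule tMP3[OF r s1(2) s2(2)]) (auto simp: tautology_def)
      then show ?thesis using s1 s2 Ann Neg by (intro exI[of _ "Imp s1 (Neg s2)"] conjI) simp_all
    next
      case (Conj b1 b2)
      have "cx (Ann a b1) < cx \<phi>" using Ann Conj
        using ineqC1[of "cx a" "cx b1" "cx b2"] ineqC2[of "cx a" "cx b2" "cx b1"] by simp
      then obtain s1 where s1: "static s1" "derivable (Iff (Ann a b1) s1)" using less by blast
      have "cx (Ann a b2) < cx \<phi>" using Ann Conj
        using ineqC1[of "cx a" "cx b1" "cx b2"] ineqC2[of "cx a" "cx b2" "cx b1"] by simp
      then obtain s2 where s2: "static s2" "derivable (Iff (Ann a b2) s2)" using less by blast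
      have r: "derivable (Iff (Ann a (Conj b1 b2)) (Conj (Ann a b1) (Ann a b2)))" by (rule R3)
      have "derivable (Iff (Ann a (Conj b1 b2)) (Conj s1 s2))" by (rule tMP3[OF r s1(2) s2(2)]) (auto simp: tautology_def)
      then show ?thesis using s1 s2 Ann Conj by (intro exI[of _ "Conj s1 s2"] conjI) simp_all
    next
      case (IntOp b')
      obtain s1 where s1: "static s1" "derivable (Iff (IntOp a) s1)" using less ia by blast
      have "cx (Ann a b') < cx \<phi>" using Ann IntOp by simp
      then obtain s2 where s2: "static s2" "derivable (Iff (Ann a b') s2)" using less by blast
      have s2': "derivable (Iff (IntOp (Ann a b')) (IntOp s2))" using s2(2) by (rule Int_cong)
      have r: "derivable (Iff (Ann a (IntOp b')) (Imp (IntOp a) (IntOp (Ann a b'))))" by (rule R4)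
      have "derivable (Iff (Ann a (IntOp b')) (Imp s1 (IntOp s2)))" by (rule tMP3[OF r s1(2) s2']) (auto simp: tautology_def)
      then show ?thesis using s1 s2 Ann IntOp by (intro exI[of _ "Imp s1 (IntOp s2)"] conjI) simp_all
    next
      case (K i b')
      obtain s1 where s1: "static s1" "derivable (Iff (IntOp a) s1)" using less ia by blast
      have "cx (Ann a b') < cx \<phi>" using Ann K by simp
      then obtain s2 where s2: "static s2" "derivable (Iff (Ann a b') s2)" using less by blast
      have s2': "derivable (Iff (K i (Ann a b')) (K i s2))" using s2(2) by (rule K_cong)
      have r: "derivable (Iff (Ann a (K i b')) (Imp (IntOp a) (K i (Ann a b'))))" by (rule R5)
      have "derivable (Iff (Ann a (K i b')) (Imp s1 (K i s2)))" by (rule tMP3[OF r s1(2) s2']) (auto simp: tautology_def)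
      then show ?thesis using s1 s2 Ann K by (intro exI[of _ "Imp s1 (K i s2)"] conjI) simp_all
    next
      case (Ann b1 b2)
      have "cx (Ann (Neg (Ann a (Neg (IntOp b1)))) b2) < cx \<phi>"
        using \<open>\<phi> = Ann a b\<close> Ann ineq6[OF cx_pos[of b2], of "cx a" "cx b1"]
        by (simp add: algebra_simps)
      then obtain s where s: "static s" "derivable (Iff (Ann (Neg (Ann a (Neg (IntOp b1)))) b2) s)"
        using less by blast
      have r: "derivable (Iff (Ann a (Ann b1 b2)) (Ann (Neg (Ann a (Neg (IntOp b1)))) b2))" by (rule R6)
      have "derivable (Iff (Ann a (Ann b1 b2)) s)" by (rule tMP2[OF r s(2)]) (auto simp: tautology_def)
      then show ?thesis using s \<open>\<phi> = Ann a b\<close> Ann by (intro exI[of _ s] conjI) simp_all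
    qed
  qed
qed


section \<open>Maximal consistent sets\<close>

definition dfrom :: "('p,'a) fm set \<Rightarrow> ('p,'a) fm \<Rightarrow> bool" where
  "dfrom S \<phi> \<longleftrightarrow> (\<exists>L. set L \<subseteq> S \<and> derivable (imps L \<phi>))"

definition consis :: "('p,'a) fm set \<Rightarrow> bool" where
  "consis S \<longleftrightarrow> \<not> dfrom S bot"

definition mcs :: "('p,'a) fm set \<Rightarrow> bool" where
  "mcs x \<longleftrightarrow> consis x \<and> (\<forall>\<phi>. \<phi> \<in> x \<or> Neg \<phi> \<in> x)"

lemma imps_taut:
  assumes "derivable (imps L a)"
    and "\<And>v. (\<forall>b\<in>set L. tv v b) \<longrightarrow> tv v a \<Longrightarrow> \<forall>b\<in>set L'. tv v b \<Longrightarrow> tv v c"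
  shows "derivable (imps L' c)"
  using assms(1) by (rule tMP) (use assms(2) in \<open>auto simp: tautology_def\<close>)

lemma consis_neg: "\<not> dfrom S \<phi> \<Longrightarrow> consis (insert (Neg \<phi>) S)"
proof (rule ccontr)
  assume nd: "\<not> dfrom S \<phi>" and "\<not> consis (insert (Neg \<phi>) S)"
  then obtain L where L: "set L \<subseteq> insert (Neg \<phi>) S" "derivable (imps L bot)"
    unfolding consis_def dfrom_def by blast
  define L' where "L' = filter (\<lambda>b. b \<noteq> Neg \<phi>) L"
  have "set L' \<subseteq> S" using L(1) unfolding L'_def by auto
  moreover have "derivable (imps L' \<phi>)"
  proof (rule imps_taut[OF L(2)])
    fix v assume h: "(\<forall>b\<in>set L. tv v b) \<longrightarrow> tv v bot" and h2: "\<forall>b\<in>set L'. tv v b"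
    show "tv v \<phi>"
    proof (rule ccontr)
      assume "\<not> tv v \<phi>"
      then have "\<forall>b\<in>set L. tv v b" using h2 unfolding L'_def by auto
      then show False using h by simp
    qed
  qed
  ultimately show False using nd unfolding dfrom_def by blast
qed

lemma consis_or: "consis S \<Longrightarrow> consis (insert \<phi> S) \<or> consis (insert (Neg \<phi>) S)"
proof (rule ccontr)
  assume c: "consis S" and n: "\<not> (consis (insert \<phi> S) \<or> consis (insert (Neg \<phi>) S))"
  then have "dfrom S \<phi>" using consis_neg by blast
  then obtain L1 where L1: "set L1 \<subseteq> S" "derivable (imps L1 \<phi>)" unfolding dfrom_def by blast
  obtain L2 where L2: "set L2 \<subseteq> insert \<phi> S" "derivable (imps L2 bot)"
    using n unfolding consis_def dfrom_def by blast
  define L where "L = L1 @ filter (\<lambda>b. b \<noteq> \<phi>) L2"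
  have "set L \<subseteq> S" using L1 L2 unfolding L_def by auto
  moreover have "derivable (imps L bot)"
  proof -
    have "derivable (imps (imps L1 \<phi> # L) bot)"
    proof (rule imps_taut[OF L2(2)])
      fix v assume h: "(\<forall>b\<in>set L2. tv v b) \<longrightarrow> tv v bot" and h2: "\<forall>b\<in>set (imps L1 \<phi> # L). tv v b"
      then have "tv v \<phi>" unfolding L_def by auto
      then have "\<forall>b\<in>set L2. tv v b" using h2 unfolding L_def by auto
      then show "tv v bot" using h by simp
    qed
    then show ?thesis using L1(2) by (auto elim: derivable.MP simp: Imp_def[symmetric])
  qed
  ultimately show False using c unfolding consis_def dfrom_def by blast
qed

primrec ext :: "('p::countable,'a::countable) fm set \<Rightarrow> nat \<Rightarrow> ('p,'a) fm set" where
  "ext S 0 = S"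
| "ext S (Suc n) = (if consis (insert (from_nat n) (ext S n)) then insert (from_nat n) (ext S n)
                    else insert (Neg (from_nat n)) (ext S n))"

lemma ext_consis: "consis S \<Longrightarrow> consis (ext S n)"
  by (induction n) (use consis_or in auto)

lemma ext_mono: "m \<le> n \<Longrightarrow> ext S m \<subseteq> ext S n"
proof (induction n)
  case 0 then show ?case by simp
next
  case (Suc n) then show ?case by (cases "m = Suc n") auto
qed

lemma fin_ext: "set L \<subseteq> (\<Union>n. ext S n) \<Longrightarrow> \<exists>n. set L \<subseteq> ext S n"
proof (induction L)
  case Nil then show ?case by simp
next
  case (Cons a L)
  then obtain n where n: "set L \<subseteq> ext S n" by auto
  obtain m where m: "a \<in> ext S m" using Cons.prems by auto
  have "set L \<subseteq> ext S (max n m)" using n ext_mono[of n "max n m" S] by auto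
  moreover have "a \<in> ext S (max n m)" using m ext_mono[of m "max n m" S] by auto
  ultimately show ?case by auto
qed

lemma lindenbaum:
  fixes S :: "('p::countable,'a::countable) fm set"
  shows "consis S \<Longrightarrow> \<exists>x. mcs x \<and> S \<subseteq> x"
proof -
  assume c: "consis S"
  define x where "x = (\<Union>n. ext S n)"
  have "consis x"
    unfolding consis_def
  proof
    assume "dfrom x bot"
    then obtain L where L: "set L \<subseteq> x" "derivable (imps L bot)" unfolding dfrom_def by blast
    then obtain n where "set L \<subseteq> ext S n" using fin_ext unfolding x_def by blast
    then have "dfrom (ext S n) bot" using L(2) unfolding dfrom_def by blast
    then show False using ext_consis[OF c, of n] unfolding consis_def by blast
  qed
  moreover have "\<phi> \<in> x \<or> Neg \<phi> \<in> x" for \<phi>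
  proof -
    have "\<phi> \<in> ext S (Suc (to_nat \<phi>)) \<or> Neg \<phi> \<in> ext S (Suc (to_nat \<phi>))" by simp
    then show ?thesis unfolding x_def by blast
  qed
  moreover have "S \<subseteq> x" unfolding x_def using ext.simps(1)[of S] by blast
  ultimately show ?thesis unfolding mcs_def by blast
qed

lemma mcs_dfrom: "mcs x \<Longrightarrow> dfrom x \<phi> \<Longrightarrow> \<phi> \<in> x"
proof (rule ccontr)
  assume m: "mcs x" and d: "dfrom x \<phi>" and n: "\<phi> \<notin> x"
  then have nx: "Neg \<phi> \<in> x" unfolding mcs_def by blast
  obtain L where L: "set L \<subseteq> x" "derivable (imps L \<phi>)" using d unfolding dfrom_def by blast
  have "derivable (imps (Neg \<phi> # L) bot)" by (rule imps_taut[OF L(2)]) auto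
  moreover have "set (Neg \<phi> # L) \<subseteq> x" using L(1) nx by auto
  ultimately show False using m unfolding mcs_def consis_def dfrom_def by blast
qed

lemma mcs_imps: "mcs x \<Longrightarrow> derivable (imps L \<phi>) \<Longrightarrow> set L \<subseteq> x \<Longrightarrow> \<phi> \<in> x"
  using mcs_dfrom unfolding dfrom_def by blast

lemma mcs_deriv: "mcs x \<Longrightarrow> derivable \<phi> \<Longrightarrow> \<phi> \<in> x"
  using mcs_imps[of x "[]"] by simp

lemma mcs_Neg: "mcs x \<Longrightarrow> (Neg \<phi> \<in> x) = (\<phi> \<notin> x)"
proof -
  assume m: "mcs x"
  have "\<not> (\<phi> \<in> x \<and> Neg \<phi> \<in> x)"
  proof
    assume h: "\<phi> \<in> x \<and> Neg \<phi> \<in> x"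
    have "derivable (imps [\<phi>, Neg \<phi>] bot)" by (rule Taut) (simp add: tautology_def)
    then show False using h m unfolding mcs_def consis_def dfrom_def
      by (metis empty_subsetI insert_subset list.set(1) list.set(2))
  qed
  then show ?thesis using m unfolding mcs_def by blast
qed

lemma mcs_Conj: "mcs x \<Longrightarrow> (Conj a b \<in> x) = (a \<in> x \<and> b \<in> x)"
proof -
  assume m: "mcs x"
  have 1: "derivable (imps [Conj a b] a)" by (rule Taut) (simp add: tautology_def)
  have 2: "derivable (imps [Conj a b] b)" by (rule Taut) (simp add: tautology_def)
  have 3: "derivable (imps [a, b] (Conj a b))" by (rule Taut) (simp add: tautology_def)
  show ?thesis
  proof
    assume c: "Conj a b \<in> x"
    show "a \<in> x \<and> b \<in> x" using mcs_imps[OF m 1] mcs_imps[OF m 2] c by simp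
  next
    assume "a \<in> x \<and> b \<in> x"
    then show "Conj a b \<in> x" using mcs_imps[OF m 3] by simp
  qed
qed

lemma mcs_MP: "mcs x \<Longrightarrow> Imp a b \<in> x \<Longrightarrow> a \<in> x \<Longrightarrow> b \<in> x"
proof -
  assume m: "mcs x" and h: "Imp a b \<in> x" "a \<in> x"
  have 1: "derivable (imps [Imp a b, a] b)" by (rule Taut) (simp add: tautology_def)
  show ?thesis using mcs_imps[OF m 1] h by simp
qed

lemma norm_imps_gen:
  assumes kax: "\<And>\<phi> \<psi>. derivable (Imp (M (Imp \<phi> \<psi>)) (Imp (M \<phi>) (M \<psi>)))"
  shows "derivable (Imp B (M (imps L \<phi>))) \<Longrightarrow> derivable (Imp B (imps (map M L) (M \<phi>)))"
proof (induction L arbitrary: B)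
  case Nil then show ?case by simp
next
  case (Cons a L)
  have "derivable (Imp (Conj B (M a)) (M (imps L \<phi>)))"
    using Cons.prems kax[of a "imps L \<phi>"] by (rule tMP2) (auto simp: tautology_def)
  then have "derivable (Imp (Conj B (M a)) (imps (map M L) (M \<phi>)))" by (rule Cons.IH)
  then show ?case by (rule tMP) (auto simp: tautology_def)
qed

lemma norm_imps:
  assumes nec: "\<And>\<phi>. derivable \<phi> \<Longrightarrow> derivable (M \<phi>)"
    and kax: "\<And>\<phi> \<psi>. derivable (Imp (M (Imp \<phi> \<psi>)) (Imp (M \<phi>) (M \<psi>)))"
    and d: "derivable (imps L \<phi>)"
  shows "derivable (imps (map M L) (M \<phi>))"
proof -
  have "derivable (Imp top (M (imps L \<phi>)))" using nec[OF d] by (rule tMP) (auto simp: tautology_def)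
  then have "derivable (Imp top (imps (map M L) (M \<phi>)))" by (rule norm_imps_gen[OF kax])
  then show ?thesis using dtop by (rule tMP2) (auto simp: tautology_def)
qed

lemma mcs_K:
  assumes m: "mcs x" and d: "derivable (imps L \<phi>)" and h: "\<forall>a\<in>set L. K i a \<in> x"
  shows "K i \<phi> \<in> x"
proof -
  have "derivable (imps (map (K i) L) (K i \<phi>))"
    by (rule norm_imps[where M="K i"]) (auto intro: derivable.intros d)
  moreover have "set (map (K i) L) \<subseteq> x" using h by auto
  ultimately show ?thesis using mcs_imps[OF m] by blast
qed

lemma mcs_Int:
  assumes m: "mcs x" and d: "derivable (imps L \<phi>)" and h: "\<forall>a\<in>set L. IntOp a \<in> x"
  shows "IntOp \<phi> \<in> x"
proof -
  have "derivable (imps (map IntOp L) (IntOp \<phi>))"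
    by (rule norm_imps[where M="IntOp"]) (auto intro: derivable.intros d)
  moreover have "set (map IntOp L) \<subseteq> x" using h by auto
  ultimately show ?thesis using mcs_imps[OF m] by blast
qed




section \<open>Canonical model\<close>

definition rel :: "'a \<Rightarrow> ('p,'a) fm set \<Rightarrow> ('p,'a) fm set \<Rightarrow> bool" where
  "rel i x y \<longleftrightarrow> (\<forall>\<chi>. K i \<chi> \<in> x \<longleftrightarrow> K i \<chi> \<in> y)"

lemma box_sub:
  assumes mx: "mcs x" and my: "mcs y" and h: "\<forall>\<chi>. K i \<chi> \<in> x \<longrightarrow> \<chi> \<in> y"
  shows "rel i x y"
  unfolding rel_def
proof (intro allI iffI)
  fix \<chi> assume "K i \<chi> \<in> x"
  then have "K i (K i \<chi>) \<in> x" using mcs_MP[OF mx] mcs_deriv[OF mx K_4] by blast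
  then show "K i \<chi> \<in> y" using h by blast
next
  fix \<chi> assume y: "K i \<chi> \<in> y"
  show "K i \<chi> \<in> x"
  proof (rule ccontr)
    assume "K i \<chi> \<notin> x"
    then have "Neg (K i \<chi>) \<in> x" using mcs_Neg[OF mx] by blast
    then have "K i (Neg (K i \<chi>)) \<in> x" using mcs_MP[OF mx] mcs_deriv[OF mx K_5] by blast
    then have "Neg (K i \<chi>) \<in> y" using h by blast
    then show False using y mcs_Neg[OF my] by blast
  qed
qed

lemma K_truth:
  fixes x :: "('p::countable,'a::countable) fm set"
  assumes mx: "mcs x"
  shows "K i \<phi> \<in> x \<longleftrightarrow> (\<forall>y. mcs y \<and> rel i x y \<longrightarrow> \<phi> \<in> y)"
proof
  assume k: "K i \<phi> \<in> x"
  show "\<forall>y. mcs y \<and> rel i x y \<longrightarrow> \<phi> \<in> y"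
  proof (intro allI impI)
    fix y assume y: "mcs y \<and> rel i x y"
    then have "K i \<phi> \<in> y" using k unfolding rel_def by blast
    moreover have "Imp (K i \<phi>) \<phi> \<in> y" using y mcs_deriv[of y, OF _ K_T] by blast
    ultimately show "\<phi> \<in> y" using mcs_MP[of y] y by blast
  qed
next
  assume h: "\<forall>y. mcs y \<and> rel i x y \<longrightarrow> \<phi> \<in> y"
  show "K i \<phi> \<in> x"
  proof (rule ccontr)
    assume nk: "K i \<phi> \<notin> x"
    have "\<not> dfrom {\<chi>. K i \<chi> \<in> x} \<phi>"
    proof
      assume "dfrom {\<chi>. K i \<chi> \<in> x} \<phi>"
      then obtain L where "set L \<subseteq> {\<chi>. K i \<chi> \<in> x}" "derivable (imps L \<phi>)" unfolding dfrom_def by blast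
      then have "K i \<phi> \<in> x" using mcs_K[OF mx] by blast
      then show False using nk by blast
    qed
    then have "consis (insert (Neg \<phi>) {\<chi>. K i \<chi> \<in> x})" by (rule consis_neg)
    then obtain y where y: "mcs y" "insert (Neg \<phi>) {\<chi>. K i \<chi> \<in> x} \<subseteq> y" using lindenbaum by blast
    have "rel i x y" using box_sub[OF mx y(1)] y(2) by blast
    then have "\<phi> \<in> y" using h y(1) by blast
    moreover have "Neg \<phi> \<in> y" using y(2) by blast
    ultimately show False using mcs_Neg[OF y(1)] by blast
  qed
qed

definition MM :: "('p,'a) fm set set" where "MM = {x. mcs x}"

definition NN :: "('p,'a) fm set \<Rightarrow> ('p,'a) fm \<Rightarrow> ('p,'a) fm set set" where
  "NN x \<psi> = {y. mcs y \<and> \<psi> \<in> y \<and> (\<forall>i. rel i x y)}"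

definition opn :: "('p,'a) fm set set \<Rightarrow> bool" where
  "opn U \<longleftrightarrow> U \<subseteq> MM \<and> (\<forall>x\<in>U. \<exists>\<psi>. IntOp \<psi> \<in> x \<and> NN x \<psi> \<subseteq> U)"

lemma opn_mcs: "opn U \<Longrightarrow> x \<in> U \<Longrightarrow> mcs x"
  unfolding opn_def MM_def by blast

lemma Int_conj: "mcs x \<Longrightarrow> IntOp a \<in> x \<Longrightarrow> IntOp b \<in> x \<Longrightarrow> IntOp (Conj a b) \<in> x"
proof -
  assume m: "mcs x" and a: "IntOp a \<in> x" and b: "IntOp b \<in> x"
  have d: "derivable (imps [a, b] (Conj a b))" by (rule Taut) (simp add: tautology_def)
  show ?thesis using mcs_Int[OF m d] a b by simp
qed

lemma istop: "istopology (opn :: ('p,'a) fm set set \<Rightarrow> bool)"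
  unfolding istopology_def
proof (intro conjI allI impI)
  fix U W :: "('p,'a) fm set set" assume u: "opn U" and w: "opn W"
  show "opn (U \<inter> W)" unfolding opn_def
  proof (intro conjI ballI)
    show "U \<inter> W \<subseteq> MM" using u unfolding opn_def by blast
    fix x assume x: "x \<in> U \<inter> W"
    obtain a where a: "IntOp a \<in> x" "NN x a \<subseteq> U" using u x unfolding opn_def by blast
    obtain b where b: "IntOp b \<in> x" "NN x b \<subseteq> W" using w x unfolding opn_def by blast
    have mx: "mcs x" using u x unfolding opn_def MM_def by blast
    have "IntOp (Conj a b) \<in> x" using Int_conj[OF mx a(1) b(1)] .
    moreover have "NN x (Conj a b) \<subseteq> U \<inter> W"
    proof
      fix y assume "y \<in> NN x (Conj a b)"
      then have y: "mcs y" "Conj a b \<in> y" "\<forall>i. rel i x y" unfolding NN_def by auto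
      then have "a \<in> y" "b \<in> y" using mcs_Conj[OF y(1)] by auto
      then have "y \<in> NN x a" "y \<in> NN x b" using y unfolding NN_def by auto
      then show "y \<in> U \<inter> W" using a b by blast
    qed
    ultimately show "\<exists>\<psi>. IntOp \<psi> \<in> x \<and> NN x \<psi> \<subseteq> U \<inter> W" by blast
  qed
next
  fix \<K> :: "('p,'a) fm set set set" assume h: "\<forall>K\<in>\<K>. opn K"
  show "opn (\<Union>\<K>)" unfolding opn_def
  proof (intro conjI ballI)
    show "\<Union>\<K> \<subseteq> MM" using h unfolding opn_def by blast
    fix x assume "x \<in> \<Union>\<K>"
    then obtain K where K: "K \<in> \<K>" "x \<in> K" by blast
    then obtain \<psi> where "IntOp \<psi> \<in> x" "NN x \<psi> \<subseteq> K" using h unfolding opn_def by blast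
    then show "\<exists>\<psi>. IntOp \<psi> \<in> x \<and> NN x \<psi> \<subseteq> \<Union>\<K>" using K by blast
  qed
qed

definition TT :: "('p,'a) fm set topology" where "TT = topology opn"

lemma openin_TT: "openin TT = opn"
  unfolding TT_def by (rule topology_inverse'[OF istop])

lemma IntOp_top: "mcs x \<Longrightarrow> IntOp top \<in> x"
  using mcs_deriv NecInt dtop by blast

lemma opn_MM: "opn MM"
  unfolding opn_def
proof (intro conjI ballI)
  show "MM \<subseteq> MM" by simp
  fix x assume "x \<in> MM"
  then have "IntOp top \<in> x" using IntOp_top unfolding MM_def by blast
  moreover have "NN x top \<subseteq> MM" unfolding NN_def MM_def by blast
  ultimately show "\<exists>\<psi>. IntOp \<psi> \<in> x \<and> NN x \<psi> \<subseteq> MM" by blast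
qed

lemma topspace_TT: "topspace TT = MM"
  unfolding topspace_def openin_TT using opn_MM unfolding opn_def by blast

definition CC :: "('p,'a) fm set \<Rightarrow> 'a \<Rightarrow> ('p,'a) fm set set" where
  "CC x i = {y. mcs y \<and> rel i x y}"

lemma opn_CC: "opn (CC x i)"
  unfolding opn_def
proof (intro conjI ballI)
  show "CC x i \<subseteq> MM" unfolding CC_def MM_def by blast
  fix z assume z: "z \<in> CC x i"
  then have "IntOp top \<in> z" using IntOp_top unfolding CC_def by blast
  moreover have "NN z top \<subseteq> CC x i"
  proof
    fix y assume "y \<in> NN z top"
    then have "mcs y" "rel i z y" unfolding NN_def by auto
    moreover have "rel i x z" using z unfolding CC_def by blast
    ultimately show "y \<in> CC x i" unfolding CC_def rel_def by blast
  qed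
  ultimately show "\<exists>\<psi>. IntOp \<psi> \<in> z \<and> NN z \<psi> \<subseteq> CC x i" by blast
qed

definition th0 :: "(('p,'a) fm set, 'a) nbf" where
  "th0 x = (if mcs x then Some (\<lambda>i. CC x i) else None)"

definition PP :: "(('p,'a) fm set, 'a) nbf set" where
  "PP = {restr U th0 | U. opn U}"

definition VV :: "'p \<Rightarrow> ('p,'a) fm set set" where
  "VV p = {x. mcs x \<and> Atom p \<in> x}"

lemma dom_th0: "dom th0 = MM"
  unfolding th0_def MM_def dom_def by auto

lemma the_th: "opn U \<Longrightarrow> x \<in> U \<Longrightarrow> the (restr U th0 x) i = CC x i \<inter> U"
proof -
  assume u: "opn U" and x: "x \<in> U"
  then have "mcs x" using opn_mcs by blast
  then show ?thesis using x by (simp add: restr_def th0_def)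
qed

lemma dom_th: "opn U \<Longrightarrow> dom (restr U th0) = U"
  using dom_th0 unfolding dom_restr opn_def by blast

lemma canon_model: "topo_model (TT :: ('p,'a) fm set topology) PP (VV :: 'p \<Rightarrow> ('p,'a) fm set set)"
  unfolding topo_model_def nbf_set_def
proof (intro conjI ballI allI impI)
  fix p show "VV p \<subseteq> topspace TT" unfolding topspace_TT VV_def MM_def by blast
next
  fix \<theta> :: "(('p,'a) fm set, 'a) nbf" assume "\<theta> \<in> PP"
  then obtain U where U: "\<theta> = restr U th0" "opn U" unfolding PP_def by blast
  have d: "dom \<theta> = U" using dom_th[OF U(2)] U(1) by simp
  show "dom \<theta> \<subseteq> topspace TT" using d U(2) unfolding topspace_TT opn_def by blast
  {
    fix x :: "('p,'a) fm set" and i :: 'a assume x: "x \<in> dom \<theta>"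
    then have xu: "x \<in> U" using d by simp
    have eq: "the (\<theta> x) i = CC x i \<inter> U" using the_th[OF U(2) xu] U(1) by simp
    have mx: "mcs x" using opn_mcs[OF U(2) xu] .
    show "openin TT (the (\<theta> x) i)" unfolding eq
      by (rule openin_Int) (simp_all add: openin_TT opn_CC U(2))
    show "x \<in> the (\<theta> x) i" unfolding eq CC_def rel_def using mx xu by blast
    show "the (\<theta> x) i \<subseteq> dom \<theta>" unfolding eq d by blast
    fix y assume y: "y \<in> the (\<theta> x) i"
    then have yu: "y \<in> U" and rxy: "rel i x y" unfolding eq CC_def by auto
    have "CC y i = CC x i" using rxy unfolding CC_def rel_def by blast
    then show "the (\<theta> x) i = the (\<theta> y) i" using eq the_th[OF U(2) yu] U(1) by simp
  }
  fix W :: "('p,'a) fm set set" assume "openin TT W"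
  then have w: "opn W" unfolding openin_TT .
  have r: "restr W \<theta> = restr (W \<inter> U) th0" using U(1) by (simp add: restr_restr)
  have "openin TT (W \<inter> U)" by (rule openin_Int) (simp_all add: openin_TT w U(2))
  then have "opn (W \<inter> U)" by (simp add: openin_TT)
  with r show "restr W \<theta> \<in> PP" unfolding PP_def by blast
qed


abbreviation th1 where "th1 \<equiv> restr MM th0"

lemma th1_in: "th1 \<in> PP"
  unfolding PP_def using opn_MM by blast

lemma dom_th1: "dom th1 = MM"
  using dom_th[OF opn_MM] .

lemma the_th1: "mcs x \<Longrightarrow> the (th1 x) i = CC x i"
proof -
  assume "mcs x"
  then have "x \<in> MM" unfolding MM_def by blast
  then have "the (th1 x) i = CC x i \<inter> MM" by (rule the_th[OF opn_MM])
  moreover have "CC x i \<subseteq> MM" unfolding CC_def MM_def by blast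
  ultimately show ?thesis by (simp add: Int_absorb2)
qed

lemma int_lemma:
  fixes x :: "('p::countable,'a::countable) fm set"
  assumes mx: "mcs x"
  shows "(x \<in> TT interior_of {y. mcs y \<and> \<phi> \<in> y}) = (IntOp \<phi> \<in> x)"
proof
  assume "IntOp \<phi> \<in> x"
  define W where "W = {y :: ('p,'a) fm set. mcs y \<and> IntOp \<phi> \<in> y}"
  have "opn W" unfolding opn_def
  proof (intro conjI ballI)
    show "W \<subseteq> MM" unfolding W_def MM_def by blast
    fix z assume z: "z \<in> W"
    then have mz: "mcs z" and iz: "IntOp \<phi> \<in> z" unfolding W_def by auto
    have "Imp (IntOp \<phi>) (IntOp (IntOp \<phi>)) \<in> z" using mcs_deriv[OF mz Int_4] .
    then have "IntOp (IntOp \<phi>) \<in> z" using mcs_MP[OF mz] iz by blast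
    moreover have "NN z (IntOp \<phi>) \<subseteq> W" unfolding NN_def W_def by blast
    ultimately show "\<exists>\<psi>. IntOp \<psi> \<in> z \<and> NN z \<psi> \<subseteq> W" by blast
  qed
  moreover have "W \<subseteq> {y. mcs y \<and> \<phi> \<in> y}"
  proof
    fix y assume "y \<in> W"
    then have my: "mcs y" and iy: "IntOp \<phi> \<in> y" unfolding W_def by auto
    have "Imp (IntOp \<phi>) \<phi> \<in> y" using mcs_deriv[OF my Int_T] .
    then have "\<phi> \<in> y" using mcs_MP[OF my] iy by blast
    then show "y \<in> {y. mcs y \<and> \<phi> \<in> y}" using my by blast
  qed
  moreover have "x \<in> W" unfolding W_def using mx \<open>IntOp \<phi> \<in> x\<close> by blast
  ultimately show "x \<in> TT interior_of {y. mcs y \<and> \<phi> \<in> y}"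
    unfolding interior_of_def openin_TT by blast
next
  assume "x \<in> TT interior_of {y. mcs y \<and> \<phi> \<in> y}"
  then obtain U where U: "opn U" "x \<in> U" "U \<subseteq> {y. mcs y \<and> \<phi> \<in> y}"
    unfolding interior_of_def openin_TT by blast
  then obtain \<psi> where \<psi>: "IntOp \<psi> \<in> x" "NN x \<psi> \<subseteq> U" unfolding opn_def by blast
  define \<Gamma> where "\<Gamma> = insert \<psi> {\<chi>. \<exists>i. K i \<chi> \<in> x}"
  have "dfrom \<Gamma> \<phi>"
  proof (rule ccontr)
    assume "\<not> dfrom \<Gamma> \<phi>"
    then have "consis (insert (Neg \<phi>) \<Gamma>)" by (rule consis_neg)
    then obtain y where y: "mcs y" "insert (Neg \<phi>) \<Gamma> \<subseteq> y" using lindenbaum by blast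
    have "\<forall>i. rel i x y"
    proof
      fix i
      have "\<forall>\<chi>. K i \<chi> \<in> x \<longrightarrow> \<chi> \<in> y" using y(2) unfolding \<Gamma>_def by blast
      then show "rel i x y" by (rule box_sub[OF mx y(1)])
    qed
    moreover have "\<psi> \<in> y" using y(2) unfolding \<Gamma>_def by blast
    ultimately have "y \<in> NN x \<psi>" using y(1) unfolding NN_def by blast
    then have "\<phi> \<in> y" using \<psi>(2) U(3) by blast
    moreover have "Neg \<phi> \<in> y" using y(2) by blast
    ultimately show False using mcs_Neg[OF y(1)] by blast
  qed
  then obtain L where L: "set L \<subseteq> \<Gamma>" "derivable (imps L \<phi>)" unfolding dfrom_def by blast
  have "\<forall>a\<in>set L. IntOp a \<in> x"
  proof
    fix a assume "a \<in> set L"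
    then have "a \<in> \<Gamma>" using L(1) by blast
    then show "IntOp a \<in> x"
    proof (cases "a = \<psi>")
      case True then show ?thesis using \<psi>(1) by simp
    next
      case False
      then obtain i where k: "K i a \<in> x" using \<open>a \<in> \<Gamma>\<close> unfolding \<Gamma>_def by blast
      have "Imp (K i a) (IntOp a) \<in> x" using mcs_deriv[OF mx K_Int] .
      then show ?thesis using mcs_MP[OF mx] k by blast
    qed
  qed
  then show "IntOp \<phi> \<in> x" using mcs_Int[OF mx L(2)] by blast
qed

lemma truth:
  fixes \<phi> :: "('p::countable,'a::countable) fm"
  shows "static \<phi> \<Longrightarrow> mcs x \<Longrightarrow> sat TT VV \<phi> th1 x = (\<phi> \<in> x)"
proof (induction \<phi> arbitrary: x)
  case (Atom p) then show ?case unfolding VV_def by simp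
next
  case (Neg \<phi>) then show ?case using mcs_Neg[OF Neg.prems(2)] by simp
next
  case (Conj \<phi> \<psi>) then show ?case using mcs_Conj[OF Conj.prems(2)] by simp
next
  case (K i \<phi>)
  have "sat TT VV (K i \<phi>) th1 x = (\<forall>y\<in>CC x i. sat TT VV \<phi> th1 y)"
    using the_th1[OF K.prems(2)] by simp
  also have "\<dots> = (\<forall>y. mcs y \<and> rel i x y \<longrightarrow> \<phi> \<in> y)"
    using K.IH K.prems(1) unfolding CC_def by auto
  also have "\<dots> = (K i \<phi> \<in> x)" using K_truth[OF K.prems(2)] by simp
  finally show ?case .
next
  case (IntOp \<phi>)
  have "{y \<in> dom th1. sat TT VV \<phi> th1 y} = {y. mcs y \<and> \<phi> \<in> y}"
    using IntOp.IH IntOp.prems(1) unfolding dom_th1 unfolding MM_def by auto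
  then show ?case using int_lemma[OF IntOp.prems(2)] by simp
next
  case (Ann \<phi> \<psi>) then show ?case by simp
qed

theorem mainTheorem2:
  fixes \<phi> :: "('p :: countable, 'a :: finite) fm"
  assumes "valid_all TYPE(('p, 'a) fm set) \<phi>"
  shows "derivable \<phi>"
proof -
  obtain s where s: "static s" "derivable (Iff \<phi> s)" using reduction by blast
  have tm: "topo_model (TT :: ('p,'a) fm set topology) PP (VV :: 'p \<Rightarrow> ('p,'a) fm set set)"
    by (rule canon_model)
  have v1: "valid_in TT PP VV \<phi>" using assms tm unfolding valid_all_def by blast
  have v2: "valid_in TT PP VV (Iff \<phi> s)" using sound_valid[OF tm s(2)] .
  have sx: "s \<in> x" if mx: "mcs x" for x
  proof -
    have xd: "x \<in> dom th1" using mx unfolding dom_th1 unfolding MM_def by blast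
    have "sat TT VV \<phi> th1 x" using v1 th1_in xd unfolding valid_in_def by blast
    moreover have "sat TT VV (Iff \<phi> s) th1 x" using v2 th1_in xd unfolding valid_in_def by blast
    ultimately have "sat TT VV s th1 x" by simp
    then show ?thesis using truth[OF s(1) mx] by simp
  qed
  have ds: "derivable s"
  proof (rule ccontr)
    assume n: "\<not> derivable s"
    have "\<not> dfrom {} s" using n unfolding dfrom_def by auto
    then have "consis (insert (Neg s) {})" by (rule consis_neg)
    then obtain x :: "('p,'a) fm set" where x: "mcs x" "insert (Neg s) {} \<subseteq> x" using lindenbaum by blast
    then have "s \<in> x" using sx by blast
    moreover have "Neg s \<in> x" using x(2) by blast
    ultimately show False using mcs_Neg[OF x(1)] by blast
  qed
  show ?thesis using s(2) ds by (rule tMP2) (auto simp: tautology_def)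
qed


end
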